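(* Let $\mathbf{X}=(X_1,\dots,X_d)$ be a random vector such that each $X_i$ is a.s. nonnegative with $0<E(X_i)<\infty$, and let $\|\mathbf{x}\|_F=E(\max(|x_0|,|x_1|X_1,\dots,|x_d|X_d))$. For any $\mathbf{x}\in\mathbb{R}^{d+1}$, $$\max(|x_0|,|x_1|E(X_1),\dots,|x_d|E(X_d))\le\|\mathbf{x}\|_F\le|x_0|+\sum_{i=1}^d|x_i|E(X_i).$$ The upper bound is strict whenever $x_0\ne0$ and $x_i\ne0$ for at least one $i\in\{1,\dots,d\}$. *)

theory Defs
  imports "HOL-Probability.Probability"
begin

text \<open>The random vector X = (X_1,...,X_d) is given as a family X :: nat => 'a => real,
  indexed by i in {1..d}; a point x of R^(d+1) is a function nat => real on indices {0..d}.\<close>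

definition F_norm :: "'a measure \<Rightarrow> (nat \<Rightarrow> 'a \<Rightarrow> real) \<Rightarrow> nat \<Rightarrow> (nat \<Rightarrow> real) \<Rightarrow> real" where
  "F_norm M X d x =
     (\<integral>\<omega>. Max ({\<bar>x 0\<bar>} \<union> {\<bar>x i\<bar> * X i \<omega> | i. i \<in> {1..d}}) \<partial>M)"

end

theory Submission
  imports Defs
begin

theorem proposition2p17:
  fixes M :: "'a measure" and X :: "nat \<Rightarrow> 'a \<Rightarrow> real" and d :: nat and x :: "nat \<Rightarrow> real"
  assumes "prob_space M"
    and "\<And>i. i \<in> {1..d} \<Longrightarrow> X i \<in> borel_measurable M"
    and "\<And>i. i \<in> {1..d} \<Longrightarrow> AE \<omega> in M. X i \<omega> \<ge> 0"
    and "\<And>i. i \<in> {1..d} \<Longrightarrow> integrable M (X i)"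
    and "\<And>i. i \<in> {1..d} \<Longrightarrow> (\<integral>\<omega>. X i \<omega> \<partial>M) > 0"
  shows "Max ({\<bar>x 0\<bar>} \<union> {\<bar>x i\<bar> * (\<integral>\<omega>. X i \<omega> \<partial>M) | i. i \<in> {1..d}}) \<le> F_norm M X d x
       \<and> F_norm M X d x \<le> \<bar>x 0\<bar> + (\<Sum>i=1..d. \<bar>x i\<bar> * (\<integral>\<omega>. X i \<omega> \<partial>M))
       \<and> ((x 0 \<noteq> 0 \<and> (\<exists>i\<in>{1..d}. x i \<noteq> 0)) \<longrightarrow>
            F_norm M X d x < \<bar>x 0\<bar> + (\<Sum>i=1..d. \<bar>x i\<bar> * (\<integral>\<omega>. X i \<omega> \<partial>M)))"
proof -
  interpret P: prob_space M by fact
  define h where "h i \<omega> = (if i = 0 then \<bar>x 0\<bar> else \<bar>x i\<bar> * X i \<omega>)" for i \<omega>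
  have hfun: "h i = (if i = 0 then (\<lambda>_. \<bar>x 0\<bar>) else (\<lambda>\<omega>. \<bar>x i\<bar> * X i \<omega>))" for i
    by (auto simp: h_def fun_eq_iff)
  define G where "G \<omega> = Max ((\<lambda>i. h i \<omega>) ` {0..d})" for \<omega>
  define S where "S \<omega> = (\<Sum>i=0..d. h i \<omega>)" for \<omega>
  have setq: "{\<bar>x 0\<bar>} \<union> {\<bar>x i\<bar> * X i \<omega> | i. i \<in> {1..d}} = (\<lambda>i. h i \<omega>) ` {0..d}" for \<omega>
    by (auto simp: h_def image_iff)
  have FG: "F_norm M X d x = integral\<^sup>L M G"
    unfolding F_norm_def G_def setq ..
  have hint: "integrable M (h i)" if "i \<in> {0..d}" for i
  proof (cases "i = 0")
    case True
    have "h i = (\<lambda>_. \<bar>x 0\<bar>)" using True by (simp add: h_def fun_eq_iff)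
    then show ?thesis by simp
  next
    case False then have "i \<in> {1..d}" using that by auto
    have "h i = (\<lambda>\<omega>. \<bar>x i\<bar> * X i \<omega>)" using False by (simp add: h_def fun_eq_iff)
    then show ?thesis using assms(4)[OF \<open>i \<in> {1..d}\<close>] by simp
  qed
  have hmeas: "h i \<in> borel_measurable M" if "i \<in> {0..d}" for i
    using hint[OF that] by auto
  have hE: "integral\<^sup>L M (h i) = (if i = 0 then \<bar>x 0\<bar> else \<bar>x i\<bar> * (\<integral>\<omega>. X i \<omega> \<partial>M))" for i
    by (simp add: hfun P.prob_space)
  have Gmeas: "G \<in> borel_measurable M"
    unfolding G_def by (rule borel_measurable_Max) (auto intro: hmeas)
  have Sint: "integrable M S"
    unfolding S_def by (rule Bochner_Integration.integrable_sum[where f=h]) (auto intro: hint)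
  have AEnn: "AE \<omega> in M. \<forall>i\<in>{1..d}. X i \<omega> \<ge> 0"
    by (rule AE_finite_allI) (auto intro: assms(3))
  have hnn: "h i \<omega> \<ge> 0" if "\<forall>i\<in>{1..d}. X i \<omega> \<ge> 0" "i \<in> {0..d}" for i \<omega>
    using that by (auto simp: h_def)
  have GS: "G \<omega> \<le> S \<omega>" if nn: "\<forall>i\<in>{1..d}. X i \<omega> \<ge> 0" for \<omega>
    unfolding G_def S_def
  proof (subst Max_le_iff, simp, simp, safe)
    fix i assume "i \<in> {0..d}"
    then show "h i \<omega> \<le> (\<Sum>i=0..d. h i \<omega>)"
      by (intro member_le_sum) (auto intro: hnn[OF nn])
  qed
  have hG: "h i \<omega> \<le> G \<omega>" if "i \<in> {0..d}" for i \<omega>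
    unfolding G_def using that by (intro Max_ge) auto
  have Gint: "integrable M G"
  proof (rule Bochner_Integration.integrable_bound[OF Sint Gmeas])
    show "AE \<omega> in M. norm (G \<omega>) \<le> norm (S \<omega>)"
      using AEnn
    proof eventually_elim
      case (elim \<omega>)
      have "0 \<le> h 0 \<omega>" by (simp add: h_def)
      also have "\<dots> \<le> G \<omega>" by (rule hG) auto
      finally show ?case using GS[OF elim] by simp
    qed
  qed
  have ES: "integral\<^sup>L M S = \<bar>x 0\<bar> + (\<Sum>i=1..d. \<bar>x i\<bar> * (\<integral>\<omega>. X i \<omega> \<partial>M))"
  proof -
    have "integral\<^sup>L M S = (\<Sum>i=0..d. integral\<^sup>L M (h i))"
      unfolding S_def by (rule Bochner_Integration.integral_sum[where f=h]) (auto intro: hint)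
    also have "\<dots> = integral\<^sup>L M (h 0) + (\<Sum>i=1..d. integral\<^sup>L M (h i))"
      by (simp add: sum.atLeast_Suc_atMost)
    also have "\<dots> = \<bar>x 0\<bar> + (\<Sum>i=1..d. \<bar>x i\<bar> * (\<integral>\<omega>. X i \<omega> \<partial>M))"
      by (simp add: hE)
    finally show ?thesis .
  qed
  have part1: "Max ({\<bar>x 0\<bar>} \<union> {\<bar>x i\<bar> * (\<integral>\<omega>. X i \<omega> \<partial>M) | i. i \<in> {1..d}}) \<le> F_norm M X d x"
  proof (subst Max_le_iff, simp, simp, safe)
    show "\<bar>x 0\<bar> \<le> F_norm M X d x"
      unfolding FG using Bochner_Integration.integral_mono[OF hint[of 0] Gint hG[of 0]] by (simp add: hE)
  next
    fix i :: nat assume i: "i \<in> {1..d}"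
    then have "integral\<^sup>L M (h i) \<le> integral\<^sup>L M G"
      by (intro Bochner_Integration.integral_mono[OF hint Gint hG]) auto
    then show "\<bar>x i\<bar> * (\<integral>\<omega>. X i \<omega> \<partial>M) \<le> F_norm M X d x"
      using i by (simp add: FG hE)
  qed
  have part2: "F_norm M X d x \<le> \<bar>x 0\<bar> + (\<Sum>i=1..d. \<bar>x i\<bar> * (\<integral>\<omega>. X i \<omega> \<partial>M))"
    unfolding FG ES[symmetric]
    by (rule integral_mono_AE[OF Gint Sint]) (use AEnn GS in auto)
  have part3: "F_norm M X d x < \<bar>x 0\<bar> + (\<Sum>i=1..d. \<bar>x i\<bar> * (\<integral>\<omega>. X i \<omega> \<partial>M))"
    if x0: "x 0 \<noteq> 0" and ex: "\<exists>i\<in>{1..d}. x i \<noteq> 0"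
  proof -
    obtain j where j: "j \<in> {1..d}" "x j \<noteq> 0" using ex by auto
    define m where "m \<omega> = min (h 0 \<omega>) (h j \<omega>)" for \<omega>
    have mle: "m \<omega> \<le> S \<omega> - G \<omega>" if nn: "\<forall>i\<in>{1..d}. X i \<omega> \<ge> 0" for \<omega>
    proof -
      have "G \<omega> \<in> (\<lambda>i. h i \<omega>) ` {0..d}" unfolding G_def by (intro Max_in) auto
      then obtain k where k: "k \<in> {0..d}" "G \<omega> = h k \<omega>" by auto
      have split: "S \<omega> = h k \<omega> + (\<Sum>i\<in>{0..d}-{k}. h i \<omega>)"
        unfolding S_def using k(1) by (simp add: sum.remove)
      have nn2: "\<And>i. i \<in> {0..d} - {k} \<Longrightarrow> 0 \<le> h i \<omega>" using hnn[OF nn] by auto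
      show ?thesis
      proof (cases "k = 0")
        case True
        have "h j \<omega> \<le> (\<Sum>i\<in>{0..d}-{k}. h i \<omega>)"
          using j True by (intro member_le_sum nn2) auto
        then show ?thesis using split k True by (simp add: m_def)
      next
        case False
        have "h 0 \<omega> \<le> (\<Sum>i\<in>{0..d}-{k}. h i \<omega>)"
          using False by (intro member_le_sum nn2) auto
        then show ?thesis using split k by (simp add: m_def)
      qed
    qed
    have mint: "integrable M m"
      unfolding m_def using hint[of 0] hint[of j] j by (intro integrable_min) auto
    have mnn: "AE \<omega> in M. 0 \<le> m \<omega>"
      using AEnn by eventually_elim (use hnn j in \<open>auto simp: m_def\<close>)
    have mpos: "integral\<^sup>L M m > 0"
    proof (rule ccontr)
      assume "\<not> integral\<^sup>L M m > 0"
      moreover have "integral\<^sup>L M m \<ge> 0" by (rule integral_nonneg_AE[OF mnn])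
      ultimately have "integral\<^sup>L M m = 0" by simp
      then have "AE \<omega> in M. m \<omega> = 0" using integral_nonneg_eq_0_iff_AE[OF mint mnn] by simp
      then have "AE \<omega> in M. X j \<omega> = 0"
        using AEnn
      proof eventually_elim
        case (elim \<omega>)
        then show ?case using j x0 by (auto simp: m_def h_def min_def split: if_splits)
      qed
      then have "(\<integral>\<omega>. X j \<omega> \<partial>M) = (\<integral>\<omega>. 0 \<partial>M)" using assms(2)[OF j(1)] by (intro integral_cong_AE) auto
      then show False using assms(5)[OF j(1)] by simp
    qed
    have "integral\<^sup>L M m \<le> integral\<^sup>L M (\<lambda>\<omega>. S \<omega> - G \<omega>)"
      by (rule integral_mono_AE[OF mint]) (use Sint Gint AEnn mle in auto)
    also have "\<dots> = integral\<^sup>L M S - integral\<^sup>L M G"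
      by (rule Bochner_Integration.integral_diff[OF Sint Gint])
    finally show ?thesis using mpos FG ES by simp
  qed
  show ?thesis using part1 part2 part3 by blast
qed

end
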